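(* Let $G$, $P$, $\pi$, $v_{\mathrm{root}}$, $\alpha\in(0,1)$ be as in the context, with $P$ fixed, let $0<\zeta<\frac{1-\alpha}{\alpha}P_{\min}$, $\epsilon>0$, $S=\sum_{a\in\Sigma}(\sum_{e:L(e)=a}P(e))^2$ and $\delta=1-S-\epsilon$. For each prefix length $n'$ let $\mathcal W_{n'}$ be the set of $\zeta$-typical paths defined in the context and let $$P(E_{\mathrm{bad}})=\sum P(\mathbf w)P(\mathbf w'),$$ the sum running over pairs of distinct $\mathbf w,\mathbf w'\in\mathcal W_{n'}$ with $d_H(L(\mathbf w),L(\mathbf w'))/n'<\delta$. Then $$\limsup_{n'\to\infty}\frac{1}{n'}\log P(E_{\mathrm{bad}})\le-\inf_{Q\in A_{\zeta,\delta}}\bigl(2H(P)-H(Q)\bigr)+\mathcal O(\zeta),$$ where the constant in the $\mathcal O$ notation depends only on $P$.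
   Context: $G=(V,E,L)$ is a deterministic, lossless, primitive labeled directed graph over a finite alphabet $\Sigma$; edge $e$ has initial vertex $\sigma(e)$, terminal vertex $\tau(e)$, label $L(e)$. $P$ is a probability mass function on $E$ with $P(e)>0$ for all $e$, stationary: with $\pi(u)=\sum_{e:\sigma(e)=u}P(e)$, $\pi(u)=\sum_{e:\tau(e)=u}P(e)$. Write $p(\tau(e)\mid\sigma(e))=P(e)/\pi(\sigma(e))$. $H(P)=-\sum_eP(e)\log_2\frac{P(e)}{\pi(\sigma(e))}$ and $P_{\min}=\min_eP(e)$. $v_{\mathrm{root}}\in V$ is fixed. $\mathcal W_{n'}$ is the set of paths $\mathbf w=(e_1,\dots,e_{n'})$ in $G$ with $\sigma(e_1)=v_{\mathrm{root}}$ and $|S_{\mathbf w}(e)/n'-P(e)|<\zeta$ for all $e\in E$, where $S_{\mathbf w}(e)=|\{i:e_i=e\}|$; $P(\mathbf w)=\prod_{i=1}^{n'}p(\tau(e_i)\mid\sigma(e_i))$ is the probability that a random walk governed by $P$ from $v_{\mathrm{root}}$ equals $\mathbf w$ (at vertex $u$ the next edge $e$ is chosen with probability $P(e)/\pi(u)$). $d_H$ is Hamming distance between label sequences. (In the paper these prefixes are those of the codewords of $\mathcal C_{\mathrm{pool}}$, and $P(E_{\mathrm{bad}})$ is the mass of bad pairs of codewords.) Product graph $\mathcal G=G\times G$: vertex set $V\times V$, an edge $(e,e')$ from $(\sigma(e),\sigma(e'))$ to $(\tau(e),\tau(e'))$ for each $e,e'\in E$. $\mathcal M_s$ is the set of probability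 measures $Q$ on edges of $\mathcal G$ that are stationary (distribution of initial vertices equals distribution of terminal vertices); $H(Q)=-\sum_{\mathbf e}Q(\mathbf e)\log\frac{Q(\mathbf e)}{Q_1(\sigma(\mathbf e))}$ with $Q_1$ the initial-vertex marginal. $Q_w(e)=\sum_{e'}Q(e,e')$, $Q_{w'}(e')=\sum_eQ(e,e')$, $f(e,e')=\mathbb 1[L(e)\ne L(e')]$, and $A_{\zeta,\delta}=\{Q\in\mathcal M_s:|Q_w(e)-P(e)|<\zeta,\ |Q_{w'}(e)-P(e)|<\zeta\ \forall e\in E,\ \mathbb E_Q[f]\le\delta\}$. *)

theory Defs
  imports Complex_Main "HOL-Library.Extended_Real" "HOL-Library.Liminf_Limsup"
begin

text \<open>Labeled directed graph G = (V,E,L): vertices = finite type 'v, edges = finite type 'e,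
  initial vertex sig, terminal vertex tau, labels L :: 'e => 'l (alphabet = finite type 'l).\<close>

definition is_path :: "('e \<Rightarrow> 'v) \<Rightarrow> ('e \<Rightarrow> 'v) \<Rightarrow> 'e list \<Rightarrow> bool" where
  "is_path sig tau p \<longleftrightarrow> (\<forall>i. Suc i < length p \<longrightarrow> tau (p ! i) = sig (p ! Suc i))"

definition deterministic :: "('e \<Rightarrow> 'v) \<Rightarrow> ('e \<Rightarrow> 'l) \<Rightarrow> bool" where
  "deterministic sig L \<longleftrightarrow> (\<forall>e e'. sig e = sig e' \<and> L e = L e' \<longrightarrow> e = e')"

definition lossless :: "('e \<Rightarrow> 'v) \<Rightarrow> ('e \<Rightarrow> 'v) \<Rightarrow> ('e \<Rightarrow> 'l) \<Rightarrow> bool" where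
  "lossless sig tau L \<longleftrightarrow>
     (\<forall>p q. is_path sig tau p \<and> is_path sig tau q \<and> p \<noteq> [] \<and> q \<noteq> [] \<and>
        sig (hd p) = sig (hd q) \<and> tau (last p) = tau (last q) \<and> map L p = map L q \<longrightarrow> p = q)"

definition primitive :: "('e \<Rightarrow> 'v) \<Rightarrow> ('e \<Rightarrow> 'v) \<Rightarrow> bool" where
  "primitive sig tau \<longleftrightarrow>
     (\<exists>k>0. \<forall>u v. \<exists>p. is_path sig tau p \<and> length p = k \<and> sig (hd p) = u \<and> tau (last p) = v)"

definition vmarg :: "('e::finite \<Rightarrow> 'v) \<Rightarrow> ('e \<Rightarrow> real) \<Rightarrow> 'v \<Rightarrow> real" where
  "vmarg sig P u = (\<Sum>e\<in>{e. sig e = u}. P e)"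

definition stationary_edge_pmf :: "('e::finite \<Rightarrow> 'v) \<Rightarrow> ('e \<Rightarrow> 'v) \<Rightarrow> ('e \<Rightarrow> real) \<Rightarrow> bool" where
  "stationary_edge_pmf sig tau P \<longleftrightarrow>
     (\<forall>e. P e > 0) \<and> (\<Sum>e\<in>UNIV. P e) = 1 \<and> (\<forall>u. vmarg sig P u = vmarg tau P u)"

definition entropy_P :: "('e::finite \<Rightarrow> 'v) \<Rightarrow> ('e \<Rightarrow> real) \<Rightarrow> real" where
  "entropy_P sig P = - (\<Sum>e\<in>UNIV. P e * log 2 (P e / vmarg sig P (sig e)))"

definition Pmin :: "('e::finite \<Rightarrow> real) \<Rightarrow> real" where
  "Pmin P = Min (range P)"

definition path_prob :: "('e \<Rightarrow> 'v) \<Rightarrow> ('e::finite \<Rightarrow> real) \<Rightarrow> 'e list \<Rightarrow> real" where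
  "path_prob sig P w = (\<Prod>i<length w. P (w ! i) / vmarg sig P (sig (w ! i)))"

definition typical_paths ::
  "('e::finite \<Rightarrow> 'v) \<Rightarrow> ('e \<Rightarrow> 'v) \<Rightarrow> ('e \<Rightarrow> real) \<Rightarrow> 'v \<Rightarrow> real \<Rightarrow> nat \<Rightarrow> 'e list set" where
  "typical_paths sig tau P vroot \<zeta> n =
     {w. is_path sig tau w \<and> length w = n \<and> w \<noteq> [] \<and> sig (hd w) = vroot \<and>
         (\<forall>e. \<bar>real (count_list w e) / real n - P e\<bar> < \<zeta>)}"

definition hamming :: "'a list \<Rightarrow> 'a list \<Rightarrow> nat" where
  "hamming x y = card {i. i < length x \<and> i < length y \<and> x ! i \<noteq> y ! i}"

definition P_bad ::
  "('e::finite \<Rightarrow> 'v) \<Rightarrow> ('e \<Rightarrow> 'v) \<Rightarrow> ('e \<Rightarrow> 'l) \<Rightarrow> ('e \<Rightarrow> real) \<Rightarrow> 'v \<Rightarrow> real \<Rightarrow> real \<Rightarrow> nat \<Rightarrow> real" where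
  "P_bad sig tau L P vroot \<zeta> \<delta> n =
     (\<Sum>(w, w') \<in> {(w, w'). w \<in> typical_paths sig tau P vroot \<zeta> n \<and> w' \<in> typical_paths sig tau P vroot \<zeta> n
                     \<and> w \<noteq> w' \<and> real (hamming (map L w) (map L w')) / real n < \<delta>}.
        path_prob sig P w * path_prob sig P w')"

definition log_rate :: "real \<Rightarrow> nat \<Rightarrow> ereal" where
  "log_rate p n = (if p = 0 then -\<infinity> else ereal (log 2 p / real n))"

text \<open>Product graph G x G: edges are pairs (e,e'), from (sig e, sig e') to (tau e, tau e').\<close>
definition Q_init :: "('e \<Rightarrow> 'v) \<Rightarrow> ('e \<times> 'e \<Rightarrow> real) \<Rightarrow> 'v \<times> 'v \<Rightarrow> real" where
  "Q_init sig Q x = (\<Sum>p\<in>{p. (sig (fst p), sig (snd p)) = x}. Q p)"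

definition Q_term :: "('e \<Rightarrow> 'v) \<Rightarrow> ('e \<times> 'e \<Rightarrow> real) \<Rightarrow> 'v \<times> 'v \<Rightarrow> real" where
  "Q_term tau Q x = (\<Sum>p\<in>{p. (tau (fst p), tau (snd p)) = x}. Q p)"

definition stationary_prod_measures :: "('e::finite \<Rightarrow> 'v) \<Rightarrow> ('e \<Rightarrow> 'v) \<Rightarrow> ('e \<times> 'e \<Rightarrow> real) set" where
  "stationary_prod_measures sig tau =
     {Q. (\<forall>p. Q p \<ge> 0) \<and> (\<Sum>p\<in>UNIV. Q p) = 1 \<and> (\<forall>x. Q_init sig Q x = Q_term tau Q x)}"

definition entropy_Q :: "('e::finite \<Rightarrow> 'v) \<Rightarrow> ('e \<times> 'e \<Rightarrow> real) \<Rightarrow> real" where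
  "entropy_Q sig Q = - (\<Sum>p\<in>UNIV. Q p * log 2 (Q p / Q_init sig Q (sig (fst p), sig (snd p))))"

definition A_set ::
  "('e::finite \<Rightarrow> 'v) \<Rightarrow> ('e \<Rightarrow> 'v) \<Rightarrow> ('e \<Rightarrow> 'l) \<Rightarrow> ('e \<Rightarrow> real) \<Rightarrow> real \<Rightarrow> real \<Rightarrow> ('e \<times> 'e \<Rightarrow> real) set" where
  "A_set sig tau L P \<zeta> \<delta> =
     {Q \<in> stationary_prod_measures sig tau.
        (\<forall>e. \<bar>(\<Sum>e'\<in>UNIV. Q (e, e')) - P e\<bar> < \<zeta>) \<and>
        (\<forall>e. \<bar>(\<Sum>e'\<in>UNIV. Q (e', e)) - P e\<bar> < \<zeta>) \<and>
        (\<Sum>p\<in>UNIV. Q p * (if L (fst p) \<noteq> L (snd p) then 1 else 0)) \<le> \<delta>}"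

end

theory Submission
  imports Defs "HOL-Library.FuncSet" "HOL-Real_Asymp.Real_Asymp"
begin


lemma count_sum:
  fixes f :: "'a::finite \<Rightarrow> real"
  shows "(\<Sum>p\<in>UNIV. real (count_list c p) * f p) = (\<Sum>i<length c. f (c!i))"
proof (induction c)
  case Nil then show ?case by simp
next
  case (Cons x xs)
  have "(\<Sum>p\<in>UNIV. real (count_list (x#xs) p) * f p)
      = (\<Sum>p\<in>UNIV. (if x = p then f p else 0) + real (count_list xs p) * f p)"
    by (intro sum.cong) (auto simp: algebra_simps)
  also have "\<dots> = f x + (\<Sum>p\<in>UNIV. real (count_list xs p) * f p)"
    by (simp add: sum.distrib)
  finally show ?case using Cons by (simp del: sum.lessThan_Suc add: sum.lessThan_Suc_shift)
qed

lemma count_prod: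
  fixes f :: "'a::finite \<Rightarrow> real"
  shows "(\<Prod>p\<in>UNIV. f p ^ count_list c p) = (\<Prod>i<length c. f (c!i))"
proof (induction c)
  case Nil then show ?case by simp
next
  case (Cons x xs)
  have "(\<Prod>p\<in>UNIV. f p ^ count_list (x#xs) p)
      = (\<Prod>p\<in>UNIV. (if x = p then f p else 1) * f p ^ count_list xs p)"
    by (intro prod.cong) auto
  also have "\<dots> = f x * (\<Prod>p\<in>UNIV. f p ^ count_list xs p)"
    by (simp add: prod.distrib)
  finally show ?case using Cons by (simp del: prod.lessThan_Suc add: prod.lessThan_Suc_shift)
qed

lemma sum_count_length: "(\<Sum>p\<in>(UNIV::'a::finite set). real (count_list c p)) = real (length c)"
  using count_sum[of c "\<lambda>_. 1"] by simp

lemma log_sum2: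
  fixes a1 a2 c1 c2 :: real
  assumes "0 \<le> a1" "a1 \<le> c1" "0 \<le> a2" "a2 \<le> c2"
  shows "(a1 + a2) * ln ((a1 + a2) / (c1 + c2)) \<le> a1 * ln (a1 / c1) + a2 * ln (a2 / c2)"
proof (cases "a1 + a2 = 0")
  case True
  then have "a1 = 0" "a2 = 0" using assms by auto
  then show ?thesis by simp
next
  case False
  define A where "A = a1 + a2"
  define C where "C = c1 + c2"
  have A: "A > 0" using False assms A_def by auto
  have C: "C \<ge> A" using assms A_def C_def by auto
  have key: "a * ln (a / c) - a * ln (A / C) \<ge> a - c * A / C" if "0 \<le> a" "a \<le> c" for a c
  proof (cases "a = 0")
    case True
    then show ?thesis using that A C by simp
  next
    case False
    then have a: "a > 0" "c > 0" using that by auto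
    have "ln (a / c) - ln (A / C) = ln ((a * C) / (c * A))"
      using a A C by (simp add: ln_div ln_mult)
    also have "\<dots> \<ge> 1 - (c * A) / (a * C)"
    proof -
      have p: "(c * A) / (a * C) > 0" using a A C by simp
      have "ln ((c * A) / (a * C)) \<le> (c * A) / (a * C) - 1" using ln_le_minus_one[OF p] .
      moreover have "ln ((a * C) / (c * A)) = - ln ((c * A) / (a * C))"
        using a A C by (simp add: ln_div)
      ultimately show ?thesis by simp
    qed
    finally have "a * (ln (a / c) - ln (A / C)) \<ge> a * (1 - (c * A) / (a * C))"
      using a by (intro mult_left_mono) auto
    then show ?thesis using a A C by (simp add: algebra_simps)
  qed
  have h1: "a1 * ln (a1 / c1) - a1 * ln (A / C) + (a2 * ln (a2 / c2) - a2 * ln (A / C))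
      \<ge> a1 - c1 * A / C + (a2 - c2 * A / C)"
    using key[OF assms(1,2)] key[OF assms(3,4)] by linarith
  have h2: "a1 - c1 * A / C + (a2 - c2 * A / C) = 0"
    using A C unfolding A_def C_def by (simp add: field_simps)
  have h3: "A * ln (A / C) = a1 * ln (A / C) + a2 * ln (A / C)"
    unfolding A_def by (simp add: distrib_right)
  have "A * ln (A / C) \<le> a1 * ln (a1 / c1) + a2 * ln (a2 / c2)"
    using h1 h2 h3 by linarith
  then show ?thesis unfolding A_def C_def .
qed



definition sp :: "('e \<Rightarrow> 'v) \<Rightarrow> 'e \<times> 'e \<Rightarrow> 'v \<times> 'v" where
  "sp sig p = (sig (fst p), sig (snd p))"

lemma Q_init_alt:
  fixes Q :: "'e::finite \<times> 'e \<Rightarrow> real"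
  shows "Q_init sig Q x = (\<Sum>p\<in>UNIV. if sp sig p = x then Q p else 0)"
  unfolding Q_init_def sp_def using sum.inter_filter[of "UNIV::('e\<times>'e) set" Q "\<lambda>p. (sig (fst p), sig (snd p)) = x"]
  by simp

lemma Q_term_alt:
  fixes Q :: "'e::finite \<times> 'e \<Rightarrow> real"
  shows "Q_term tau Q x = (\<Sum>p\<in>UNIV. if sp tau p = x then Q p else 0)"
  unfolding Q_term_def sp_def using sum.inter_filter[of "UNIV::('e\<times>'e) set" Q "\<lambda>p. (tau (fst p), tau (snd p)) = x"]
  by simp

lemma Q_init_le:
  fixes Q :: "'e::finite \<times> 'e \<Rightarrow> real"
  assumes "\<And>p. Q p \<ge> 0"
  shows "Q p \<le> Q_init sig Q (sig (fst p), sig (snd p))"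
  unfolding Q_init_def by (rule member_le_sum) (auto simp: assms)

lemma Q_init_le_total:
  fixes Q :: "'e::finite \<times> 'e \<Rightarrow> real"
  assumes "\<And>p. Q p \<ge> 0"
  shows "Q_init sig Q x \<le> (\<Sum>p\<in>UNIV. Q p)"
  unfolding Q_init_def by (rule sum_mono2) (auto simp: assms)

lemma Q_init_lin:
  fixes A B :: "'e::finite \<times> 'e \<Rightarrow> real"
  shows "Q_init sig (\<lambda>p. a * A p + b * B p) x = a * Q_init sig A x + b * Q_init sig B x"
  unfolding Q_init_def by (simp add: sum.distrib sum_distrib_left)

lemma Q_term_lin:
  fixes A B :: "'e::finite \<times> 'e \<Rightarrow> real"
  shows "Q_term tau (\<lambda>p. a * A p + b * B p) x = a * Q_term tau A x + b * Q_term tau B x"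
  unfolding Q_term_def by (simp add: sum.distrib sum_distrib_left)

lemma scale_term:
  fixes l a c :: real
  assumes "0 \<le> l"
  shows "(l * a) * ln ((l * a) / (l * c)) = l * (a * ln (a / c))"
proof (cases "l = 0")
  case True then show ?thesis by simp
next
  case False
  then have "(l * a) / (l * c) = a / c" by simp
  then show ?thesis by simp
qed

lemma entropy_concave:
  fixes A B :: "'e::finite \<times> 'e \<Rightarrow> real"
  assumes A: "\<And>p. A p \<ge> 0" and B: "\<And>p. B p \<ge> 0" and l: "0 \<le> l" and m: "0 \<le> m"
  shows "entropy_Q sig (\<lambda>p. l * A p + m * B p) \<ge> l * entropy_Q sig A + m * entropy_Q sig B"
proof -
  let ?IA = "\<lambda>p. Q_init sig A (sig (fst p), sig (snd p))"
  let ?IB = "\<lambda>p. Q_init sig B (sig (fst p), sig (snd p))"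
  have trm: "(l * A p + m * B p) * log 2 ((l * A p + m * B p) / (l * ?IA p + m * ?IB p))
      \<le> l * (A p * log 2 (A p / ?IA p)) + m * (B p * log 2 (B p / ?IB p))" for p
  proof -
    have "(l * A p + m * B p) * ln ((l * A p + m * B p) / (l * ?IA p + m * ?IB p))
        \<le> (l * A p) * ln ((l * A p) / (l * ?IA p)) + (m * B p) * ln ((m * B p) / (m * ?IB p))"
      using A B l m Q_init_le[of A p sig, OF A] Q_init_le[of B p sig, OF B]
      by (intro log_sum2) (auto intro: mult_left_mono)
    also have "\<dots> = l * (A p * ln (A p / ?IA p)) + m * (B p * ln (B p / ?IB p))"
      using scale_term[OF l] scale_term[OF m] by simp
    finally show ?thesis by (simp add: log_def divide_right_mono add_divide_distrib[symmetric])
  qed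
  have "entropy_Q sig (\<lambda>p. l * A p + m * B p)
      = - (\<Sum>p\<in>UNIV. (l * A p + m * B p) * log 2 ((l * A p + m * B p) / (l * ?IA p + m * ?IB p)))"
    unfolding entropy_Q_def Q_init_lin by simp
  also have "\<dots> \<ge> - (\<Sum>p\<in>UNIV. l * (A p * log 2 (A p / ?IA p)) + m * (B p * log 2 (B p / ?IB p)))"
    using trm by (intro le_imp_neg_le sum_mono) auto
  finally show ?thesis unfolding entropy_Q_def
    by (simp add: sum.distrib sum_distrib_left[symmetric])
qed

lemma entropy_nonneg:
  fixes A :: "'e::finite \<times> 'e \<Rightarrow> real"
  assumes A: "\<And>p. A p \<ge> 0"
  shows "entropy_Q sig A \<ge> 0"
proof -
  have "A p * log 2 (A p / Q_init sig A (sig (fst p), sig (snd p))) \<le> 0" for p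
  proof (cases "A p = 0")
    case True then show ?thesis by simp
  next
    case False
    have le: "A p \<le> Q_init sig A (sig (fst p), sig (snd p))" by (rule Q_init_le[OF A])
    then have pos: "A p > 0" "Q_init sig A (sig (fst p), sig (snd p)) > 0" using A[of p] False by auto
    have "A p / Q_init sig A (sig (fst p), sig (snd p)) \<le> 1" using le pos by simp
    then have "log 2 (A p / Q_init sig A (sig (fst p), sig (snd p))) \<le> 0"
      using pos by (simp add: log_le_zero_cancel_iff)
    then show ?thesis using pos by (simp add: mult_nonneg_nonpos)
  qed
  then show ?thesis unfolding entropy_Q_def by (simp add: sum_nonpos)
qed

lemma entropy_upper:
  fixes A :: "'e::finite \<times> 'e \<Rightarrow> real"
  assumes A: "\<And>p. A p \<ge> 0" and s: "(\<Sum>p\<in>UNIV. A p) = 1"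
  shows "entropy_Q sig A \<le> real (card (UNIV::('e\<times>'e) set)) / ln 2"
proof -
  have "- (A p * log 2 (A p / Q_init sig A (sig (fst p), sig (snd p)))) \<le> 1 / ln 2" for p
  proof (cases "A p = 0")
    case True then show ?thesis by simp
  next
    case False
    define c where "c = Q_init sig A (sig (fst p), sig (snd p))"
    have le: "A p \<le> c" unfolding c_def by (rule Q_init_le[OF A])
    have c1: "c \<le> 1" using Q_init_le_total[of A sig, OF A] s unfolding c_def by simp
    have pos: "A p > 0" "c > 0" using le A[of p] False by auto
    have "- (A p * ln (A p / c)) = A p * ln (c / A p)" using pos by (simp add: ln_div algebra_simps)
    also have "\<dots> \<le> A p * (c / A p - 1)" using pos by (intro mult_left_mono ln_le_minus_one) auto
    also have "\<dots> = c - A p" using pos by (simp add: field_simps)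
    also have "\<dots> \<le> 1" using c1 pos by simp
    finally have "- (A p * ln (A p / c)) \<le> 1" .
    then have "- (A p * ln (A p / c)) / ln 2 \<le> 1 / ln 2" by (intro divide_right_mono) auto
    then show ?thesis unfolding c_def[symmetric] log_def by simp
  qed
  then have "(\<Sum>p\<in>UNIV. - (A p * log 2 (A p / Q_init sig A (sig (fst p), sig (snd p)))))
      \<le> (\<Sum>p\<in>(UNIV::('e\<times>'e) set). 1 / ln 2)" by (intro sum_mono) auto
  then show ?thesis unfolding entropy_Q_def by (simp add: sum_negf)
qed



lemma log_prod_count:
  fixes f :: "'a::finite \<Rightarrow> real"
  assumes "\<And>p. p \<in> set c \<Longrightarrow> f p > 0"
  shows "log 2 (\<Prod>i<length c. f (c!i)) = (\<Sum>p\<in>UNIV. real (count_list c p) * log 2 (f p))"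
proof -
  have pos: "\<And>i. i \<in> {..<length c} \<Longrightarrow> f (c!i) \<noteq> 0" using assms by (metis lessThan_iff less_irrefl nth_mem)
  have "log 2 (\<Prod>i<length c. f (c!i)) = (\<Sum>i<length c. ln (f (c!i))) / ln 2"
    unfolding log_def using ln_prod[of "{..<length c}" "\<lambda>i. f (c!i)"] pos by simp
  also have "\<dots> = (\<Sum>i<length c. log 2 (f (c!i)))" unfolding log_def by (simp add: sum_divide_distrib)
  also have "\<dots> = (\<Sum>p\<in>UNIV. real (count_list c p) * log 2 (f p))" by (rule count_sum[symmetric])
  finally show ?thesis .
qed

definition pe :: "('e \<Rightarrow> 'v) \<Rightarrow> ('e::finite \<Rightarrow> real) \<Rightarrow> 'e \<Rightarrow> real" where
  "pe sig P e = P e / vmarg sig P (sig e)"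

lemma vmarg_ge:
  fixes P :: "'e::finite \<Rightarrow> real"
  assumes "\<And>e. P e > 0"
  shows "P e \<le> vmarg sig P (sig e)"
  unfolding vmarg_def by (rule member_le_sum) (auto intro: less_imp_le assms)

lemma pe_pos:
  fixes P :: "'e::finite \<Rightarrow> real"
  assumes "\<And>e. P e > 0"
  shows "pe sig P e > 0"
proof -
  have "vmarg sig P (sig e) > 0" using vmarg_ge[of P e sig, OF assms] assms[of e] by linarith
  then show ?thesis unfolding pe_def using assms[of e] by simp
qed

definition KP :: "('e \<Rightarrow> 'v) \<Rightarrow> ('e::finite \<Rightarrow> real) \<Rightarrow> real" where
  "KP sig P = (\<Sum>e\<in>UNIV. \<bar>log 2 (pe sig P e)\<bar>)"

lemma path_prob_log:
  fixes P :: "'e::finite \<Rightarrow> real"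
  assumes pos: "\<And>e. P e > 0"
    and tp: "\<And>e. \<bar>real (count_list w e) / real n - P e\<bar> < \<zeta>"
    and len: "length w = n" and n: "n > 0"
  shows "path_prob sig P w > 0"
    and "log 2 (path_prob sig P w) \<le> real n * (\<zeta> * KP sig P - entropy_P sig P)"
proof -
  have eq: "path_prob sig P w = (\<Prod>i<length w. pe sig P (w!i))"
    unfolding path_prob_def pe_def by simp
  show "path_prob sig P w > 0" unfolding eq by (intro prod_pos) (simp add: pe_pos[where P=P, OF pos] less_imp_le)
  have "log 2 (path_prob sig P w) = (\<Sum>e\<in>UNIV. real (count_list w e) * log 2 (pe sig P e))"
    unfolding eq by (rule log_prod_count) (simp add: pe_pos[where P=P, OF pos])
  also have "\<dots> = real n * (\<Sum>e\<in>UNIV. (real (count_list w e) / real n) * log 2 (pe sig P e))"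
    using n by (simp add: sum_distrib_left)
  also have "\<dots> \<le> real n * (\<Sum>e\<in>UNIV. P e * log 2 (pe sig P e) + \<zeta> * \<bar>log 2 (pe sig P e)\<bar>)"
  proof (intro mult_left_mono sum_mono)
    fix e
    have "(real (count_list w e) / real n - P e) * log 2 (pe sig P e)
          \<le> \<bar>real (count_list w e) / real n - P e\<bar> * \<bar>log 2 (pe sig P e)\<bar>"
      by (metis abs_ge_self abs_mult)
    also have "\<dots> \<le> \<zeta> * \<bar>log 2 (pe sig P e)\<bar>"
      using tp[of e] by (intro mult_right_mono) auto
    finally show "(real (count_list w e) / real n) * log 2 (pe sig P e)
        \<le> P e * log 2 (pe sig P e) + \<zeta> * \<bar>log 2 (pe sig P e)\<bar>"
      by (simp add: algebra_simps)
  qed simp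
  also have "\<dots> = real n * (\<zeta> * KP sig P - entropy_P sig P)"
    unfolding KP_def entropy_P_def pe_def by (simp add: sum.distrib sum_distrib_left)
  finally show "log 2 (path_prob sig P w) \<le> real n * (\<zeta> * KP sig P - entropy_P sig P)" .
qed

definition ptype :: "('e \<times> 'e) list \<Rightarrow> 'e \<times> 'e \<Rightarrow> real" where
  "ptype z = (\<lambda>p. real (count_list z p) / real (length z))"

definition qprob :: "('e \<Rightarrow> 'v) \<Rightarrow> ('e::finite \<times> 'e \<Rightarrow> real) \<Rightarrow> ('e \<times> 'e) list \<Rightarrow> real" where
  "qprob sig T z = (\<Prod>i<length z. T (z!i) / Q_init sig T (sig (fst (z!i)), sig (snd (z!i))))"

lemma ptype_nonneg: "ptype z p \<ge> 0" unfolding ptype_def by simp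

lemma ptype_sum: "z \<noteq> [] \<Longrightarrow> (\<Sum>p\<in>(UNIV::('e::finite\<times>'e) set). ptype z p) = 1"
  unfolding ptype_def using sum_count_length[of z] by (simp add: sum_divide_distrib[symmetric])

lemma qprob_type:
  fixes z :: "('e::finite \<times> 'e) list"
  assumes "z \<noteq> []"
  shows "log 2 (qprob sig (ptype z) z) = - real (length z) * entropy_Q sig (ptype z)"
    and "qprob sig (ptype z) z > 0"
proof -
  let ?T = "ptype z"
  let ?f = "\<lambda>p. ?T p / Q_init sig ?T (sig (fst p), sig (snd p))"
  have fpos: "?f p > 0" if "p \<in> set z" for p
  proof -
    have "count_list z p > 0" using that by (metis count_list_0_iff gr0I)
    then have "?T p > 0" unfolding ptype_def using assms by simp
    moreover have "?T p \<le> Q_init sig ?T (sig (fst p), sig (snd p))"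
      by (rule Q_init_le) (rule ptype_nonneg)
    ultimately show ?thesis by simp
  qed
  show "qprob sig (ptype z) z > 0" unfolding qprob_def
    by (rule prod_pos) (use fpos in auto)
  have "log 2 (qprob sig ?T z) = (\<Sum>p\<in>UNIV. real (count_list z p) * log 2 (?f p))"
    unfolding qprob_def by (rule log_prod_count) (rule fpos)
  also have "\<dots> = real (length z) * (\<Sum>p\<in>UNIV. ?T p * log 2 (?f p))"
    unfolding ptype_def using assms by (simp add: sum_distrib_left)
  also have "\<dots> = - real (length z) * entropy_Q sig ?T"
    unfolding entropy_Q_def by simp
  finally show "log 2 (qprob sig (ptype z) z) = - real (length z) * entropy_Q sig (ptype z)" .
qed



definition prod_path :: "('e \<Rightarrow> 'v) \<Rightarrow> ('e \<Rightarrow> 'v) \<Rightarrow> ('e \<times> 'e) list \<Rightarrow> bool" where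
  "prod_path sig tau z \<longleftrightarrow> (\<forall>i. Suc i < length z \<longrightarrow> sp tau (z!i) = sp sig (z!Suc i))"

lemma prod_path_Cons:
  "prod_path sig tau (p#z) \<longleftrightarrow> (z \<noteq> [] \<longrightarrow> sp tau p = sp sig (hd z)) \<and> prod_path sig tau z"
proof
  assume H: "prod_path sig tau (p#z)"
  have "sp tau p = sp sig (hd z)" if "z \<noteq> []"
    using H that unfolding prod_path_def by (metis hd_conv_nth length_Cons length_greater_0_conv nth_Cons_0 nth_Cons_Suc Suc_less_eq)
  moreover have "prod_path sig tau z"
    unfolding prod_path_def
  proof (intro allI impI)
    fix i assume "Suc i < length z"
    then show "sp tau (z!i) = sp sig (z!Suc i)"
      using H unfolding prod_path_def by (metis Suc_less_eq length_Cons nth_Cons_Suc)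
  qed
  ultimately show "(z \<noteq> [] \<longrightarrow> sp tau p = sp sig (hd z)) \<and> prod_path sig tau z" by blast
next
  assume H: "(z \<noteq> [] \<longrightarrow> sp tau p = sp sig (hd z)) \<and> prod_path sig tau z"
  show "prod_path sig tau (p#z)"
    unfolding prod_path_def
  proof (intro allI impI)
    fix i assume i: "Suc i < length (p#z)"
    show "sp tau ((p#z)!i) = sp sig ((p#z)!Suc i)"
    proof (cases i)
      case 0
      then have "z \<noteq> []" using i by auto
      then show ?thesis using H 0 by (simp add: hd_conv_nth)
    next
      case (Suc j)
      then show ?thesis using H i unfolding prod_path_def by simp
    qed
  qed
qed

definition PS :: "('e \<Rightarrow> 'v) \<Rightarrow> ('e \<Rightarrow> 'v) \<Rightarrow> nat \<Rightarrow> 'v \<times> 'v \<Rightarrow> ('e \<times> 'e) list set" where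
  "PS sig tau n x = {z. length z = n \<and> prod_path sig tau z \<and> (z \<noteq> [] \<longrightarrow> sp sig (hd z) = x)}"

lemma finite_len: "finite {z::('a::finite) list. length z = n}"
  using finite_lists_length_eq[of "UNIV::'a set" n] by simp

lemma finite_PS: "finite (PS sig tau n (x::'v\<times>'v) :: ('e::finite\<times>'e) list set)"
  by (rule finite_subset[OF _ finite_len[of n]]) (auto simp: PS_def)

lemma PS_Suc:
  "PS sig tau (Suc n) x = (\<lambda>(p, z). p # z) ` (SIGMA p:{p. sp sig p = x}. PS sig tau n (sp tau p))"
proof (intro set_eqI iffI)
  fix z assume "z \<in> PS sig tau (Suc n) x"
  then obtain p z' where z: "z = p # z'" and l: "length z' = n" and pp: "prod_path sig tau (p#z')"
    and px: "sp sig p = x" unfolding PS_def by (cases z) auto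
  have "z' \<in> PS sig tau n (sp tau p)" unfolding PS_def using pp l by (simp add: prod_path_Cons)
  then show "z \<in> (\<lambda>(p, z). p # z) ` (SIGMA p:{p. sp sig p = x}. PS sig tau n (sp tau p))"
    using px z by (intro image_eqI[where x="(p,z')"]) auto
next
  fix z assume "z \<in> (\<lambda>(p, z). p # z) ` (SIGMA p:{p. sp sig p = x}. PS sig tau n (sp tau p))"
  then obtain p z' where "z = p#z'" "sp sig p = x" "z' \<in> PS sig tau n (sp tau p)" by auto
  then show "z \<in> PS sig tau (Suc n) x"
    unfolding PS_def by (simp add: prod_path_Cons)
qed

lemma qprob_Cons:
  "qprob sig T (p # z) = T p / Q_init sig T (sp sig p) * qprob sig T z"
  unfolding qprob_def sp_def by (simp add: prod.lessThan_Suc_shift del: prod.lessThan_Suc)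

lemma qprob_nonneg:
  fixes T :: "'e::finite \<times> 'e \<Rightarrow> real"
  assumes "\<And>p. T p \<ge> 0"
  shows "qprob sig T z \<ge> 0"
  unfolding qprob_def
  by (intro prod_nonneg divide_nonneg_nonneg assms) (auto simp: Q_init_def intro: sum_nonneg assms)

lemma sum_qprob_le1:
  fixes T :: "'e::finite \<times> 'e \<Rightarrow> real"
  assumes T: "\<And>p. T p \<ge> 0"
  shows "(\<Sum>z\<in>PS sig tau n x. qprob sig T z) \<le> 1"
proof (induction n arbitrary: x)
  case 0
  have "PS sig tau 0 x = {[]}" unfolding PS_def prod_path_def by auto
  then show ?case by (simp add: qprob_def)
next
  case (Suc n)
  have inj: "inj_on (\<lambda>(p, z). p # z) (SIGMA p:{p. sp sig p = x}. PS sig tau n (sp tau p))"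
    by (auto simp: inj_on_def)
  have "(\<Sum>z\<in>PS sig tau (Suc n) x. qprob sig T z)
      = (\<Sum>(p, z)\<in>(SIGMA p:{p. sp sig p = x}. PS sig tau n (sp tau p)). qprob sig T (p # z))"
    unfolding PS_Suc sum.reindex[OF inj] by (simp add: o_def case_prod_unfold)
  also have "\<dots> = (\<Sum>p\<in>{p. sp sig p = x}. \<Sum>z\<in>PS sig tau n (sp tau p). qprob sig T (p # z))"
    by (subst sum.Sigma) (auto simp: finite_PS)
  also have "\<dots> = (\<Sum>p\<in>{p. sp sig p = x}. T p / Q_init sig T x * (\<Sum>z\<in>PS sig tau n (sp tau p). qprob sig T z))"
    by (simp add: qprob_Cons sum_distrib_left)
  also have "\<dots> \<le> (\<Sum>p\<in>{p. sp sig p = x}. T p / Q_init sig T x)"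
  proof (intro sum_mono)
    fix p
    have "Q_init sig T x \<ge> 0" unfolding Q_init_def by (rule sum_nonneg) (simp add: T)
    then have "T p / Q_init sig T x \<ge> 0" using T[of p] by simp
    then show "T p / Q_init sig T x * (\<Sum>z\<in>PS sig tau n (sp tau p). qprob sig T z) \<le> T p / Q_init sig T x"
      using Suc.IH[of "sp tau p"] mult_left_le by blast
  qed
  also have "\<dots> = Q_init sig T x / Q_init sig T x"
    unfolding Q_init_def sp_def by (simp only: sum_divide_distrib[symmetric])
  also have "\<dots> \<le> 1" by simp
  finally show ?case .
qed

lemma card_types:
  assumes "Z \<subseteq> {z::('e::finite\<times>'e) list. length z = n}"
  shows "card (ptype ` Z) \<le> (n + 1) ^ card (UNIV::('e\<times>'e) set)"
proof -
  let ?F = "{f::('e\<times>'e) \<Rightarrow> nat. \<forall>p. f p \<in> {..n}}"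
  have F: "?F = PiE UNIV (\<lambda>_. {..n})" unfolding PiE_UNIV_domain Pi_def by simp
  have finF: "finite ?F" unfolding F by (rule finite_PiE) auto
  have cardF: "card ?F = (n + 1) ^ card (UNIV::('e\<times>'e) set)"
    unfolding F by (simp add: card_PiE)
  have sub: "ptype ` Z \<subseteq> (\<lambda>f p. real (f p) / real n) ` ?F"
  proof
    fix T assume "T \<in> ptype ` Z"
    then obtain z where z: "z \<in> Z" "T = ptype z" by auto
    then have "length z = n" using assms by auto
    then have "T = (\<lambda>p. real (count_list z p) / real n)" using z unfolding ptype_def by simp
    moreover have "count_list z \<in> ?F" using count_le_length[of z] \<open>length z = n\<close> by simp
    ultimately show "T \<in> (\<lambda>f p. real (f p) / real n) ` ?F" by blast
  qed
  have "card (ptype ` Z) \<le> card ((\<lambda>f p. real (f p) / real n) ` ?F)"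
    by (rule card_mono[OF finite_imageI[OF finF] sub])
  also have "\<dots> \<le> card ?F" by (rule card_image_le[OF finF])
  finally show ?thesis using cardF by simp
qed

lemma sum_qprob_types:
  fixes Z :: "('e::finite\<times>'e) list set"
  assumes "Z \<subseteq> PS sig tau n x"
  shows "(\<Sum>z\<in>Z. qprob sig (ptype z) z) \<le> real ((n + 1) ^ card (UNIV::('e\<times>'e) set))"
proof -
  have finZ: "finite Z" using finite_subset[OF assms finite_PS] .
  have "(\<Sum>z\<in>Z. qprob sig (ptype z) z) = (\<Sum>T\<in>ptype ` Z. \<Sum>z\<in>{z. z \<in> Z \<and> ptype z = T}. qprob sig (ptype z) z)"
    by (rule sum.image_gen[OF finZ])
  also have "\<dots> = (\<Sum>T\<in>ptype ` Z. \<Sum>z\<in>{z. z \<in> Z \<and> ptype z = T}. qprob sig T z)"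
    by (intro sum.cong refl) auto
  also have "\<dots> \<le> (\<Sum>T\<in>ptype ` Z. 1)"
  proof (intro sum_mono)
    fix T assume "T \<in> ptype ` Z"
    then have Tn: "\<And>p. T p \<ge> 0" using ptype_nonneg by auto
    have "(\<Sum>z\<in>{z. z \<in> Z \<and> ptype z = T}. qprob sig T z) \<le> (\<Sum>z\<in>PS sig tau n x. qprob sig T z)"
      by (rule sum_mono2[OF finite_PS]) (use assms qprob_nonneg[OF Tn] in auto)
    also have "\<dots> \<le> 1" by (rule sum_qprob_le1[OF Tn])
    finally show "(\<Sum>z\<in>{z. z \<in> Z \<and> ptype z = T}. qprob sig T z) \<le> 1" .
  qed
  also have "\<dots> = real (card (ptype ` Z))" by simp
  also have "\<dots> \<le> real ((n + 1) ^ card (UNIV::('e\<times>'e) set))"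
    using card_types[of Z n] assms unfolding PS_def by (simp only: of_nat_le_iff) auto
  finally show ?thesis .
qed



lemma sum_shift_cycle:
  fixes g :: "'a \<Rightarrow> real"
  assumes "\<forall>i. Suc i < N \<longrightarrow> b i = a (Suc i)" and "N > 0" and "b (N - 1) = a 0"
  shows "(\<Sum>i<N. g (a i)) = (\<Sum>i<N. g (b i))"
proof -
  obtain M where N: "N = Suc M" using assms(2) by (cases N) auto
  have "(\<Sum>i<N. g (a i)) = g (a 0) + (\<Sum>i<M. g (a (Suc i)))"
    unfolding N by (simp add: sum.lessThan_Suc_shift del: sum.lessThan_Suc)
  also have "\<dots> = g (b M) + (\<Sum>i<M. g (b i))"
    using assms(1,3) unfolding N by simp
  also have "\<dots> = (\<Sum>i<N. g (b i))" unfolding N by simp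
  finally show ?thesis .
qed

lemma cycle_stat:
  fixes c :: "('e::finite \<times> 'e) list"
  assumes "c \<noteq> []" "\<forall>i. Suc i < length c \<longrightarrow> sp tau (c!i) = sp sig (c!Suc i)"
    "sp tau (c!(length c - 1)) = sp sig (c!0)"
  shows "Q_init sig (ptype c) x = Q_term tau (ptype c) x"
proof -
  have "Q_init sig (ptype c) x = (\<Sum>p\<in>UNIV. real (count_list c p) * (if sp sig p = x then 1 else 0)) / real (length c)"
    unfolding Q_init_alt ptype_def sum_divide_distrib by (intro sum.cong) auto
  also have "\<dots> = (\<Sum>i<length c. (\<lambda>y. if y = x then 1 else 0) (sp sig (c!i))) / real (length c)"
    by (simp only: count_sum)
  also have "\<dots> = (\<Sum>i<length c. (\<lambda>y. if y = x then 1 else 0) (sp tau (c!i))) / real (length c)"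
    using sum_shift_cycle[of "length c" "\<lambda>i. sp tau (c!i)" "\<lambda>i. sp sig (c!i)"] assms by simp
  also have "\<dots> = (\<Sum>p\<in>UNIV. real (count_list c p) * (if sp tau p = x then 1 else 0)) / real (length c)"
    by (simp only: count_sum)
  also have "\<dots> = Q_term tau (ptype c) x"
    unfolding Q_term_alt ptype_def sum_divide_distrib by (intro sum.cong) auto
  finally show ?thesis .
qed

lemma count_zip_fst:
  "length a = length b \<Longrightarrow> (\<Sum>e'\<in>(UNIV::'b::finite set). real (count_list (zip a b) (e, e'))) = real (count_list a e)"
proof (induction a b rule: list_induct2)
  case Nil then show ?case by simp
next
  case (Cons x xs y ys)
  have "(\<Sum>e'\<in>(UNIV::'b set). real (count_list (zip (x#xs) (y#ys)) (e, e')))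
      = (\<Sum>e'\<in>(UNIV::'b set). (if x = e \<and> y = e' then 1 else 0) + real (count_list (zip xs ys) (e, e')))"
    by (intro sum.cong) auto
  also have "\<dots> = (if x = e then 1 else 0) + real (count_list xs e)"
    using Cons by (simp add: sum.distrib)
  finally show ?case by simp
qed

lemma count_zip_snd:
  "length a = length b \<Longrightarrow> (\<Sum>e\<in>(UNIV::'a::finite set). real (count_list (zip a b) (e, e'))) = real (count_list b e')"
proof (induction a b rule: list_induct2)
  case Nil then show ?case by simp
next
  case (Cons x xs y ys)
  have "(\<Sum>e\<in>(UNIV::'a set). real (count_list (zip (x#xs) (y#ys)) (e, e')))
      = (\<Sum>e\<in>(UNIV::'a set). (if x = e \<and> y = e' then 1 else 0) + real (count_list (zip xs ys) (e, e')))"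
    by (intro sum.cong) auto
  also have "\<dots> = (if y = e' then 1 else 0) + real (count_list ys e')"
    using Cons by (simp add: sum.distrib)
  finally show ?case by simp
qed

lemma sum_pair: "(\<Sum>p\<in>UNIV. f p) = (\<Sum>a\<in>UNIV. \<Sum>b\<in>UNIV. f (a, b))"
  for f :: "'a::finite \<times> 'b::finite \<Rightarrow> real"
  by (simp add: sum.cartesian_product UNIV_Times_UNIV[symmetric] del: UNIV_Times_UNIV)

definition Dg :: "('e \<Rightarrow> real) \<Rightarrow> 'e \<times> 'e \<Rightarrow> real" where
  "Dg P p = (if fst p = snd p then P (fst p) else 0)"

lemma Dg_sum: "(\<Sum>p\<in>UNIV. Dg P p) = (\<Sum>e\<in>UNIV. P e)" for P :: "'e::finite \<Rightarrow> real"
  unfolding sum_pair Dg_def by (simp add: if_distrib)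

lemma Dg_marg1: "(\<Sum>e'\<in>UNIV. Dg P (e, e')) = P e" for P :: "'e::finite \<Rightarrow> real"
  unfolding Dg_def by simp

lemma Dg_marg2: "(\<Sum>e'\<in>UNIV. Dg P (e', e)) = P e" for P :: "'e::finite \<Rightarrow> real"
  unfolding Dg_def by (simp add: eq_commute[of _ e])

lemma vmarg_alt: "vmarg sig P u = (\<Sum>e\<in>UNIV. if sig e = u then P e else 0)" for P :: "'e::finite \<Rightarrow> real"
  unfolding vmarg_def using sum.inter_filter[of "UNIV::'e set" P "\<lambda>e. sig e = u"] by simp

lemma diag_inner:
  fixes P :: "'e::finite \<Rightarrow> real"
  shows "(\<Sum>b\<in>UNIV. if (f a, f b) = x then (if a = b then P a else 0) else 0)
       = (if (f a, f a) = x then P a else 0)"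
proof -
  have "(\<Sum>b\<in>UNIV. if (f a, f b) = x then (if a = b then P a else 0) else 0)
      = (\<Sum>b\<in>UNIV. if a = b then (if (f a, f a) = x then P a else 0) else 0)"
    by (intro sum.cong) auto
  then show ?thesis by simp
qed

lemma Dg_init: "Q_init sig (Dg P) x = (\<Sum>e\<in>UNIV. if (sig e, sig e) = x then P e else 0)"
  for P :: "'e::finite \<Rightarrow> real"
  unfolding Q_init_alt sum_pair Dg_def sp_def fst_conv snd_conv by (simp only: diag_inner)

lemma Dg_term: "Q_term tau (Dg P) x = (\<Sum>e\<in>UNIV. if (tau e, tau e) = x then P e else 0)"
  for P :: "'e::finite \<Rightarrow> real"
  unfolding Q_term_alt sum_pair Dg_def sp_def fst_conv snd_conv by (simp only: diag_inner)

lemma Dg_stat: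
  fixes P :: "'e::finite \<Rightarrow> real"
  assumes "\<forall>u. vmarg sig P u = vmarg tau P u"
  shows "Q_init sig (Dg P) x = Q_term tau (Dg P) x"
proof -
  obtain u v where x: "x = (u, v)" by (cases x)
  show ?thesis
  proof (cases "u = v")
    case True
    have "(\<Sum>e\<in>UNIV. if (sig e, sig e) = x then P e else 0) = vmarg sig P u"
      unfolding vmarg_alt x True by (intro sum.cong) auto
    moreover have "(\<Sum>e\<in>UNIV. if (tau e, tau e) = x then P e else 0) = vmarg tau P u"
      unfolding vmarg_alt x True by (intro sum.cong) auto
    ultimately show ?thesis unfolding Dg_init Dg_term using assms by simp
  next
    case False
    then show ?thesis unfolding Dg_init Dg_term x by (intro sum.cong) auto
  qed
qed



lemma arith1:
  fixes n k m z :: real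
  assumes "n > 0" "k > 0" "m > 0" "m \<le> z"
  shows "(n * m / (n * m + k)) * ((n * z + k) / (n + k)) \<le> z"
proof -
  have d: "(n * m + k) * (n + k) > 0" using assms by (intro mult_pos_pos add_pos_pos) auto
  have "n * m * (n * z + k) \<le> z * ((n * m + k) * (n + k))"
  proof -
    have "z * ((n * m + k) * (n + k)) - n * m * (n * z + k) = n * k * (z - m) + n * m * k * z + k * k * z"
      by (simp add: algebra_simps)
    also have "\<dots> \<ge> 0" using assms by (intro add_nonneg_nonneg mult_nonneg_nonneg) auto
    finally show ?thesis by simp
  qed
  then have "n * m * (n * z + k) / ((n * m + k) * (n + k)) \<le> z"
    using d by (simp add: divide_le_eq)
  then show ?thesis by (simp add: field_simps)
qed

lemma hamming_sum:
  assumes "length w = n" "length w' = n"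
  shows "real (hamming (map L w) (map L w')) = (\<Sum>i<n. if L (w!i) \<noteq> L (w'!i) then 1 else 0)"
proof -
  have "{i. i < length (map L w) \<and> i < length (map L w') \<and> map L w ! i \<noteq> map L w' ! i}
      = {i\<in>{..<n}. L (w!i) \<noteq> L (w'!i)}" using assms by auto
  then have "hamming (map L w) (map L w') = card {i\<in>{..<n}. L (w!i) \<noteq> L (w'!i)}"
    unfolding hamming_def by simp
  also have "real \<dots> = (\<Sum>i\<in>{i\<in>{..<n}. L (w!i) \<noteq> L (w'!i)}. 1)" by simp
  also have "\<dots> = (\<Sum>i<n. if L (w!i) \<noteq> L (w'!i) then 1 else 0)"
    by (rule sum.inter_filter) simp
  finally show ?thesis .
qed



lemma construct:
  fixes sig tau :: "'e::finite \<Rightarrow> 'v" and L :: "'e \<Rightarrow> 'l" and P :: "'e \<Rightarrow> real"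
  assumes stat: "stationary_edge_pmf sig tau P"
    and k: "k > 0"
    and prim: "\<forall>u v. \<exists>p. is_path sig tau p \<and> length p = k \<and> sig (hd p) = u \<and> tau (last p) = v"
    and w: "w \<in> typical_paths sig tau P vroot \<zeta> n" and w': "w' \<in> typical_paths sig tau P vroot \<zeta> n"
    and ham: "real (hamming (map L w) (map L w')) / real n < \<delta>"
    and zeta: "\<zeta> > 0"
  shows "\<exists>Q\<in>A_set sig tau L P \<zeta> \<delta>.
     (real n * min \<zeta> \<delta> / (real n * min \<zeta> \<delta> + real k)) * (real n / (real n + real k))
       * entropy_Q sig (ptype (zip w w')) \<le> entropy_Q sig Q"
proof -
  have Ppos: "\<And>e. P e > 0" and Psum: "(\<Sum>e\<in>UNIV. P e) = 1" and Pst: "\<forall>u. vmarg sig P u = vmarg tau P u"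
    using stat unfolding stationary_edge_pmf_def by auto
  have Ple1: "P e \<le> 1" for e
    using member_le_sum[of e UNIV P] Ppos Psum by (simp add: less_imp_le)
  have wp: "is_path sig tau w" "length w = n" "w \<noteq> []" "sig (hd w) = vroot"
    and wt: "\<And>e. \<bar>real (count_list w e) / real n - P e\<bar> < \<zeta>"
    using w unfolding typical_paths_def by auto
  have wp': "is_path sig tau w'" "length w' = n" "w' \<noteq> []" "sig (hd w') = vroot"
    and wt': "\<And>e. \<bar>real (count_list w' e) / real n - P e\<bar> < \<zeta>"
    using w' unfolding typical_paths_def by auto
  have n: "n > 0" using wp by auto
  have dpos: "\<delta> > 0" using ham by (smt (verit) divide_nonneg_nonneg of_nat_0_le_iff)
  define m where "m = min \<zeta> \<delta>"
  have m: "m > 0" "m \<le> \<zeta>" "m \<le> \<delta>" using dpos zeta unfolding m_def by auto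
  obtain p1 where p1: "is_path sig tau p1" "length p1 = k" "sig (hd p1) = tau (last w)" "tau (last p1) = vroot"
    using prim by blast
  obtain p2 where p2: "is_path sig tau p2" "length p2 = k" "sig (hd p2) = tau (last w')" "tau (last p2) = vroot"
    using prim by blast
  define z where "z = zip w w'"
  define t where "t = zip p1 p2"
  define c where "c = z @ t"
  define N where "N = n + k"
  have lz: "length z = n" and lt: "length t = k" and lc: "length c = N"
    unfolding z_def t_def c_def N_def using wp wp' p1 p2 by auto
  have cnth: "c!i = (if i < n then (w!i, w'!i) else (p1!(i-n), p2!(i-n)))" if "i < N" for i
    using that lz wp wp' p1 p2 unfolding c_def z_def t_def N_def by (auto simp: nth_append)
  have ipw: "\<And>i. Suc i < n \<Longrightarrow> tau (w!i) = sig (w!Suc i)" using wp unfolding is_path_def by auto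
  have ipw': "\<And>i. Suc i < n \<Longrightarrow> tau (w'!i) = sig (w'!Suc i)" using wp' unfolding is_path_def by auto
  have ip1: "\<And>i. Suc i < k \<Longrightarrow> tau (p1!i) = sig (p1!Suc i)" using p1 unfolding is_path_def by auto
  have ip2: "\<And>i. Suc i < k \<Longrightarrow> tau (p2!i) = sig (p2!Suc i)" using p2 unfolding is_path_def by auto
  have lastw: "last w = w!(n-1)" "last w' = w'!(n-1)" using wp wp' by (auto simp: last_conv_nth)
  have pne: "p1 \<noteq> []" "p2 \<noteq> []" using p1(2) p2(2) k by auto
  have hdp: "hd p1 = p1!0" "hd p2 = p2!0" using pne by (simp_all add: hd_conv_nth)
  have lastp: "last p1 = p1!(k-1)" "last p2 = p2!(k-1)" using pne p1(2) p2(2) by (simp_all add: last_conv_nth)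
  have hdw: "hd w = w!0" "hd w' = w'!0" using wp wp' by (auto simp: hd_conv_nth)
  have cyc1: "\<forall>i. Suc i < length c \<longrightarrow> sp tau (c!i) = sp sig (c!Suc i)"
  proof (intro allI impI)
    fix i assume i: "Suc i < length c"
    then have iN: "i < N" "Suc i < N" using lc by auto
    consider "Suc i < n" | "Suc i = n" | "Suc i > n" by linarith
    then show "sp tau (c!i) = sp sig (c!Suc i)"
    proof cases
      case 1 then show ?thesis using cnth[OF iN(1)] cnth[OF iN(2)] ipw ipw' by (simp add: sp_def)
    next
      case 2
      then have "i = n - 1" by simp
      then show ?thesis using cnth[OF iN(1)] cnth[OF iN(2)] 2 lastw hdp p1(3) p2(3) by (simp add: sp_def)
    next
      case 3
      then have "Suc i - n = Suc (i - n)" "Suc (i - n) < k" using iN unfolding N_def by auto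
      then show ?thesis using cnth[OF iN(1)] cnth[OF iN(2)] 3 ip1 ip2 by (simp add: sp_def)
    qed
  qed
  have cyc2: "sp tau (c!(length c - 1)) = sp sig (c!0)"
  proof -
    have a: "N - 1 < N" "0 < N" using n unfolding N_def by auto
    have "N - 1 - n = k - 1" "\<not> N - 1 < n" using k unfolding N_def by auto
    then have "c!(N-1) = (last p1, last p2)" using cnth[OF a(1)] lastp by simp
    moreover have "c!0 = (hd w, hd w')" using cnth[OF a(2)] n hdw by simp
    ultimately show ?thesis using lc p1 p2 wp wp' by (simp add: sp_def)
  qed
  have cne: "c \<noteq> []" using lc n unfolding N_def by auto
  have cstat: "\<And>x. Q_init sig (ptype c) x = Q_term tau (ptype c) x"
    by (rule cycle_stat[OF cne cyc1 cyc2])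
  have ptc: "ptype c = (\<lambda>p. (real n / real N) * ptype z p + (real k / real N) * ptype t p)"
  proof (rule ext)
    fix p
    have a: "real n / real N * (real (count_list z p) / real n) = real (count_list z p) / real N" using n by simp
    have b: "real k / real N * (real (count_list t p) / real k) = real (count_list t p) / real k * (real k / real N)" by simp
    also have "\<dots> = real (count_list t p) / real N" using k by simp
    finally show "ptype c p = (real n / real N) * ptype z p + (real k / real N) * ptype t p"
      unfolding ptype_def using a lz lt lc unfolding c_def by (simp add: add_divide_distrib)
  qed
  define s where "s = real n * m / (real n * m + real k)"
  have nm: "real n * m > 0" using n m by simp
  have s: "0 < s" "s \<le> 1" unfolding s_def using nm k by auto
  define Q2 where "Q2 = (\<lambda>p. s * ptype c p + (1 - s) * Dg P p)"
  have Dgn: "\<And>p. Dg P p \<ge> 0" unfolding Dg_def using Ppos by (simp add: less_imp_le)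
  have Q2n: "\<And>p. Q2 p \<ge> 0" unfolding Q2_def using s Dgn ptype_nonneg by (intro add_nonneg_nonneg mult_nonneg_nonneg) auto
  have Q2s: "(\<Sum>p\<in>UNIV. Q2 p) = 1"
    unfolding Q2_def using ptype_sum[OF cne] Dg_sum[of P] Psum by (simp add: sum.distrib sum_distrib_left[symmetric])
  have Q2st: "\<forall>x. Q_init sig Q2 x = Q_term tau Q2 x"
    unfolding Q2_def Q_init_lin Q_term_lin using cstat Dg_stat[OF Pst] by simp
  have marg_gen: "\<bar>s * ((real a + real b) / real N - P e)\<bar> < \<zeta>"
    if ab: "\<bar>real a / real n - P e\<bar> < \<zeta>" "b \<le> k" for a b e
  proof -
    have eq: "(real a + real b) / real N - P e = (real n * (real a / real n - P e) + (real b - real k * P e)) / real N"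
    proof -
      have e1: "real n * (real a / real n - P e) = real a - real n * P e" using n by (simp add: field_simps)
      have Np: "real N > 0" using n unfolding N_def by simp
      have "(real a + real b) / real N - P e = (real a + real b - real N * P e) / real N"
        using Np by (simp add: field_simps)
      then show ?thesis unfolding e1 N_def by (simp add: algebra_simps)
    qed
    have b1: "\<bar>real b - real k * P e\<bar> \<le> real k"
    proof -
      have "real k * P e \<le> real k" using Ple1[of e] by (simp add: mult_left_le)
      moreover have "real k * P e \<ge> 0" using Ppos[of e] by simp
      moreover have "real b \<le> real k" using ab(2) by simp
      ultimately show ?thesis by (simp add: abs_le_iff)
    qed
    have "\<bar>real n * (real a / real n - P e) + (real b - real k * P e)\<bar> < real n * \<zeta> + real k"
    proof -
      have "\<bar>real n * (real a / real n - P e)\<bar> < real n * \<zeta>" using ab(1) n by (simp add: abs_mult)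
      then show ?thesis using b1 by linarith
    qed
    then have "\<bar>(real a + real b) / real N - P e\<bar> < (real n * \<zeta> + real k) / real N"
      unfolding eq using n unfolding N_def by (simp add: divide_strict_right_mono)
    then have "s * \<bar>(real a + real b) / real N - P e\<bar> < s * ((real n * \<zeta> + real k) / real N)"
      using s by (intro mult_strict_left_mono) auto
    also have "\<dots> \<le> \<zeta>" unfolding s_def N_def using arith1[of "real n" "real k" m \<zeta>] n k m by simp
    finally show ?thesis using s by (simp add: abs_mult)
  qed
  have marg1: "\<bar>(\<Sum>e'\<in>UNIV. Q2 (e, e')) - P e\<bar> < \<zeta>" for e
  proof -
    have cnt: "(\<Sum>e'\<in>UNIV. real (count_list c (e, e'))) = real (count_list w e) + real (count_list p1 e)"
      unfolding c_def z_def t_def using count_zip_fst[of w w' e] count_zip_fst[of p1 p2 e] wp wp' p1 p2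
      by (simp add: sum.distrib)
    have q1: "(\<Sum>e'\<in>UNIV. Q2 (e, e')) = s * (\<Sum>e'\<in>UNIV. ptype c (e, e')) + (1 - s) * (\<Sum>e'\<in>UNIV. Dg P (e, e'))"
      unfolding Q2_def by (simp add: sum.distrib sum_distrib_left)
    have q2: "(\<Sum>e'\<in>UNIV. ptype c (e, e')) = (\<Sum>e'\<in>UNIV. real (count_list c (e, e'))) / real N"
      unfolding ptype_def lc by (simp add: sum_divide_distrib)
    have "(\<Sum>e'\<in>UNIV. Q2 (e, e')) - P e = s * ((real (count_list w e) + real (count_list p1 e)) / real N - P e)"
      unfolding q1 q2 cnt Dg_marg1 by (simp add: algebra_simps)
    then show ?thesis using marg_gen[OF wt[of e], of "count_list p1 e"] count_le_length[of p1 e] p1 by simp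
  qed
  have marg2: "\<bar>(\<Sum>e'\<in>UNIV. Q2 (e', e)) - P e\<bar> < \<zeta>" for e
  proof -
    have cnt: "(\<Sum>e'\<in>UNIV. real (count_list c (e', e))) = real (count_list w' e) + real (count_list p2 e)"
      unfolding c_def z_def t_def using count_zip_snd[of w w' e] count_zip_snd[of p1 p2 e] wp wp' p1 p2
      by (simp add: sum.distrib)
    have q1: "(\<Sum>e'\<in>UNIV. Q2 (e', e)) = s * (\<Sum>e'\<in>UNIV. ptype c (e', e)) + (1 - s) * (\<Sum>e'\<in>UNIV. Dg P (e', e))"
      unfolding Q2_def by (simp add: sum.distrib sum_distrib_left)
    have q2: "(\<Sum>e'\<in>UNIV. ptype c (e', e)) = (\<Sum>e'\<in>UNIV. real (count_list c (e', e))) / real N"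
      unfolding ptype_def lc by (simp add: sum_divide_distrib)
    have "(\<Sum>e'\<in>UNIV. Q2 (e', e)) - P e = s * ((real (count_list w' e) + real (count_list p2 e)) / real N - P e)"
      unfolding q1 q2 cnt Dg_marg2 by (simp add: algebra_simps)
    then show ?thesis using marg_gen[OF wt'[of e], of "count_list p2 e"] count_le_length[of p2 e] p2 by simp
  qed
  define f where "f = (\<lambda>p::'e\<times>'e. if L (fst p) \<noteq> L (snd p) then 1 else (0::real))"
  have Ef: "(\<Sum>p\<in>UNIV. Q2 p * f p) \<le> \<delta>"
  proof -
    have D0: "(\<Sum>p\<in>UNIV. Dg P p * f p) = 0"
      by (rule sum.neutral) (auto simp: Dg_def f_def)
    have hz: "(\<Sum>p\<in>UNIV. real (count_list z p) * f p) = real (hamming (map L w) (map L w'))"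
      unfolding count_sum hamming_sum[OF wp(2) wp'(2)] using lz wp wp' unfolding z_def f_def by simp
    have ht: "(\<Sum>p\<in>UNIV. real (count_list t p) * f p) \<le> real k"
    proof -
      have "(\<Sum>p\<in>UNIV. real (count_list t p) * f p) \<le> (\<Sum>p\<in>UNIV. real (count_list t p))"
        by (intro sum_mono) (auto simp: f_def)
      then show ?thesis using sum_count_length[of t] lt by simp
    qed
    have hn: "real (hamming (map L w) (map L w')) < real n * \<delta>"
      using ham n by (simp add: divide_less_eq mult.commute)
    have "(\<Sum>p\<in>UNIV. ptype c p * f p) = ((\<Sum>p\<in>UNIV. real (count_list z p) * f p) + (\<Sum>p\<in>UNIV. real (count_list t p) * f p)) / real N"
      unfolding ptype_def c_def using lc unfolding c_def
      by (simp add: sum.distrib[symmetric] sum_divide_distrib algebra_simps)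
    also have "\<dots> \<le> (real n * \<delta> + real k) / real N"
      using hz ht hn n unfolding N_def by (intro divide_right_mono) auto
    finally have "s * (\<Sum>p\<in>UNIV. ptype c p * f p) \<le> s * ((real n * \<delta> + real k) / real N)"
      using s by (intro mult_left_mono) auto
    also have "\<dots> \<le> \<delta>" unfolding s_def N_def using arith1[of "real n" "real k" m \<delta>] n k m by simp
    finally have "s * (\<Sum>p\<in>UNIV. ptype c p * f p) \<le> \<delta>" .
    moreover have "(\<Sum>p\<in>UNIV. Q2 p * f p) = s * (\<Sum>p\<in>UNIV. ptype c p * f p) + (1 - s) * (\<Sum>p\<in>UNIV. Dg P p * f p)"
      unfolding Q2_def distrib_right sum.distrib by (simp add: sum_distrib_left mult.assoc)
    ultimately show ?thesis using D0 by simp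
  qed
  have inA: "Q2 \<in> A_set sig tau L P \<zeta> \<delta>"
    unfolding A_set_def stationary_prod_measures_def
    using Q2n Q2s Q2st marg1 marg2 Ef unfolding f_def by auto
  have "entropy_Q sig Q2 \<ge> s * entropy_Q sig (ptype c) + (1 - s) * entropy_Q sig (Dg P)"
    unfolding Q2_def using s by (intro entropy_concave ptype_nonneg Dgn) auto
  moreover have "(1 - s) * entropy_Q sig (Dg P) \<ge> 0" using s entropy_nonneg[of "Dg P" sig, OF Dgn] by simp
  moreover have "entropy_Q sig (ptype c) \<ge> (real n / real N) * entropy_Q sig (ptype z) + (real k / real N) * entropy_Q sig (ptype t)"
    unfolding ptc by (intro entropy_concave ptype_nonneg) auto
  moreover have "(real k / real N) * entropy_Q sig (ptype t) \<ge> 0" using entropy_nonneg[of "ptype t" sig, OF ptype_nonneg] by simp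
  ultimately have "s * ((real n / real N) * entropy_Q sig (ptype z)) \<le> entropy_Q sig Q2"
    using s by (smt (verit) mult_left_mono)
  then have "s * (real n / (real n + real k)) * entropy_Q sig (ptype (zip w w')) \<le> entropy_Q sig Q2"
    unfolding N_def z_def by (simp add: mult.assoc)
  then show ?thesis using inA unfolding s_def m_def by blast
qed



definition rr :: "nat \<Rightarrow> real \<Rightarrow> real \<Rightarrow> nat \<Rightarrow> real" where
  "rr n \<zeta> \<delta> k = (real n * min \<zeta> \<delta> / (real n * min \<zeta> \<delta> + real k)) * (real n / (real n + real k))"

definition BadS where
  "BadS sig tau L P vroot \<zeta> \<delta> n = {(w, w'). w \<in> typical_paths sig tau P vroot \<zeta> n \<and> w' \<in> typical_paths sig tau P vroot \<zeta> n
                     \<and> w \<noteq> w' \<and> real (hamming (map L w) (map L w')) / real n < \<delta>}"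

lemma P_bad_alt: "P_bad sig tau L P vroot \<zeta> \<delta> n = (\<Sum>(w, w') \<in> BadS sig tau L P vroot \<zeta> \<delta> n. path_prob sig P w * path_prob sig P w')"
  unfolding P_bad_def BadS_def ..

lemma finite_BadS: "finite (BadS sig tau L P vroot \<zeta> \<delta> n :: ('e::finite list \<times> 'e list) set)"
proof -
  have "BadS sig tau L P vroot \<zeta> \<delta> n \<subseteq> {w::'e list. length w = n} \<times> {w. length w = n}"
    unfolding BadS_def typical_paths_def by auto
  then show ?thesis by (rule finite_subset[OF _ finite_cartesian_product[OF finite_len finite_len]])
qed

lemma rr_le1:
  assumes "\<zeta> > 0" "\<delta> > 0" shows "rr n \<zeta> \<delta> k \<le> 1"
proof -
  have a: "real n * min \<zeta> \<delta> \<ge> 0" using assms by simp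
  have "real n * min \<zeta> \<delta> / (real n * min \<zeta> \<delta> + real k) \<le> 1"
    using a by (cases "real n * min \<zeta> \<delta> + real k = 0") (auto simp: divide_le_eq_1)
  moreover have "real n / (real n + real k) \<le> 1" by (cases "n + k = 0") (auto simp: divide_le_eq_1)
  moreover have "real n / (real n + real k) \<ge> 0" by simp
  ultimately show ?thesis unfolding rr_def by (intro mult_le_one) auto
qed

lemma Pbad_bound:
  fixes sig tau :: "'e::finite \<Rightarrow> 'v" and L :: "'e \<Rightarrow> 'l" and P :: "'e \<Rightarrow> real"
  assumes stat: "stationary_edge_pmf sig tau P"
    and k: "k > 0"
    and prim: "\<forall>u v. \<exists>p. is_path sig tau p \<and> length p = k \<and> sig (hd p) = u \<and> tau (last p) = v"
    and zeta: "\<zeta> > 0" and n: "n > 0"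
    and Ib: "\<forall>Q\<in>A_set sig tau L P \<zeta> \<delta>. entropy_Q sig Q \<le> 2 * entropy_P sig P - I"
  shows "P_bad sig tau L P vroot \<zeta> \<delta> n
     \<le> 2 powr (real n * (2 * KP sig P * \<zeta> - I + (1 - rr n \<zeta> \<delta> k) * (real (card (UNIV::('e\<times>'e) set)) / ln 2)))
        * real ((n + 1) ^ card (UNIV::('e\<times>'e) set))"
proof -
  define B where "B = real (card (UNIV::('e\<times>'e) set)) / ln 2"
  define E where "E = 2 powr (real n * (2 * KP sig P * \<zeta> - I + (1 - rr n \<zeta> \<delta> k) * B))"
  define Bad where "Bad = BadS sig tau L P vroot \<zeta> \<delta> n"
  have Ppos: "\<And>e. P e > 0" using stat unfolding stationary_edge_pmf_def by auto
  have term_bound: "path_prob sig P w * path_prob sig P w' \<le> E * qprob sig (ptype (zip w w')) (zip w w')"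
    if ww: "(w, w') \<in> Bad" for w w'
  proof -
    have w: "w \<in> typical_paths sig tau P vroot \<zeta> n" and w': "w' \<in> typical_paths sig tau P vroot \<zeta> n"
      and ham: "real (hamming (map L w) (map L w')) / real n < \<delta>"
      using ww unfolding Bad_def BadS_def by auto
    have dpos: "\<delta> > 0" using ham by (smt (verit) divide_nonneg_nonneg of_nat_0_le_iff)
    have wl: "length w = n" "length w' = n" using w w' unfolding typical_paths_def by auto
    have wt: "\<And>e. \<bar>real (count_list w e) / real n - P e\<bar> < \<zeta>" "\<And>e. \<bar>real (count_list w' e) / real n - P e\<bar> < \<zeta>"
      using w w' unfolding typical_paths_def by auto
    define z where "z = zip w w'"
    define T where "T = ptype z"
    have zl: "length z = n" and zne: "z \<noteq> []" unfolding z_def using wl n by auto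
    obtain Q where Q: "Q \<in> A_set sig tau L P \<zeta> \<delta>" and rQ: "rr n \<zeta> \<delta> k * entropy_Q sig T \<le> entropy_Q sig Q"
      using construct[OF stat k prim w w' ham zeta] unfolding rr_def T_def z_def by blast
    have HQ: "entropy_Q sig Q \<le> 2 * entropy_P sig P - I" using Ib Q by blast
    have HT: "entropy_Q sig T \<le> B" unfolding B_def T_def
      by (rule entropy_upper[OF ptype_nonneg ptype_sum[OF zne]])
    have r1: "1 - rr n \<zeta> \<delta> k \<ge> 0" using rr_le1[OF zeta dpos] by simp
    have HT2: "entropy_Q sig T \<le> 2 * entropy_P sig P - I + (1 - rr n \<zeta> \<delta> k) * B"
    proof -
      have "entropy_Q sig T = rr n \<zeta> \<delta> k * entropy_Q sig T + (1 - rr n \<zeta> \<delta> k) * entropy_Q sig T"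
        by (simp add: algebra_simps)
      also have "\<dots> \<le> entropy_Q sig Q + (1 - rr n \<zeta> \<delta> k) * B"
        using rQ HT r1 by (intro add_mono mult_left_mono) auto
      finally show ?thesis using HQ by simp
    qed
    have p1: "path_prob sig P w > 0" "log 2 (path_prob sig P w) \<le> real n * (\<zeta> * KP sig P - entropy_P sig P)"
      using path_prob_log[OF Ppos wt(1) wl(1) n] .
    have p2: "path_prob sig P w' > 0" "log 2 (path_prob sig P w') \<le> real n * (\<zeta> * KP sig P - entropy_P sig P)"
      using path_prob_log[OF Ppos wt(2) wl(2) n] .
    have q: "log 2 (qprob sig T z) = - real n * entropy_Q sig T" "qprob sig T z > 0"
      using qprob_type[OF zne, of sig] zl unfolding T_def by auto
    have "path_prob sig P w * path_prob sig P w' = 2 powr (log 2 (path_prob sig P w) + log 2 (path_prob sig P w'))"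
      using p1 p2 by (simp add: powr_add)
    also have "\<dots> \<le> 2 powr (real n * (2 * KP sig P * \<zeta> - I + (1 - rr n \<zeta> \<delta> k) * B) + log 2 (qprob sig T z))"
    proof (intro powr_mono)
      have "real n * entropy_Q sig T \<le> real n * (2 * entropy_P sig P - I + (1 - rr n \<zeta> \<delta> k) * B)"
        using HT2 by (intro mult_left_mono) auto
      then show "log 2 (path_prob sig P w) + log 2 (path_prob sig P w')
          \<le> real n * (2 * KP sig P * \<zeta> - I + (1 - rr n \<zeta> \<delta> k) * B) + log 2 (qprob sig T z)"
        using p1(2) p2(2) unfolding q(1) by (simp add: algebra_simps)
    qed simp
    also have "\<dots> = E * qprob sig T z" unfolding E_def using q(2) by (simp add: powr_add)
    finally show ?thesis unfolding T_def z_def .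
  qed
  have inj: "inj_on (\<lambda>(w, w'). zip w w') Bad"
  proof (rule inj_onI)
    fix x y assume "x \<in> Bad" "y \<in> Bad" and eq: "(\<lambda>(w, w'). zip w w') x = (\<lambda>(w, w'). zip w w') y"
    moreover obtain a b c d where "x = (a, b)" "y = (c, d)" by fastforce
    ultimately have l: "length a = n" "length b = n" "length c = n" "length d = n" and z: "zip a b = zip c d"
      unfolding Bad_def BadS_def typical_paths_def by auto
    have "a = map fst (zip a b)" "b = map snd (zip a b)" using l by auto
    moreover have "c = map fst (zip c d)" "d = map snd (zip c d)" using l by auto
    ultimately show "x = y" using z \<open>x = (a, b)\<close> \<open>y = (c, d)\<close> by metis
  qed
  have sub: "(\<lambda>(w, w'). zip w w') ` Bad \<subseteq> PS sig tau n (vroot, vroot)"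
  proof
    fix z assume "z \<in> (\<lambda>(w, w'). zip w w') ` Bad"
    then obtain w w' where z: "z = zip w w'" and ww: "(w, w') \<in> Bad" by auto
    have wp: "is_path sig tau w" "length w = n" "w \<noteq> []" "sig (hd w) = vroot"
      and wp': "is_path sig tau w'" "length w' = n" "w' \<noteq> []" "sig (hd w') = vroot"
      using ww unfolding Bad_def BadS_def typical_paths_def by auto
    have "prod_path sig tau z" unfolding prod_path_def z
      using wp(1,2) wp'(1,2) unfolding is_path_def by (auto simp: sp_def)
    moreover have "sp sig (hd z) = (vroot, vroot)"
      unfolding z using wp wp' by (auto simp: sp_def hd_conv_nth)
    ultimately show "z \<in> PS sig tau n (vroot, vroot)" unfolding PS_def z using wp wp' by auto
  qed
  have "P_bad sig tau L P vroot \<zeta> \<delta> n = (\<Sum>(w, w') \<in> Bad. path_prob sig P w * path_prob sig P w')"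
    unfolding P_bad_alt Bad_def ..
  also have "\<dots> \<le> (\<Sum>(w, w') \<in> Bad. E * qprob sig (ptype (zip w w')) (zip w w'))"
    using term_bound by (intro sum_mono) auto
  also have "\<dots> = E * (\<Sum>x \<in> Bad. (\<lambda>z. qprob sig (ptype z) z) ((\<lambda>(w, w'). zip w w') x))"
    by (simp add: sum_distrib_left case_prod_unfold)
  also have "\<dots> = E * (\<Sum>z \<in> (\<lambda>(w, w'). zip w w') ` Bad. qprob sig (ptype z) z)"
    using sum.reindex[OF inj, of "\<lambda>z. qprob sig (ptype z) z"] by (simp add: o_def)
  also have "\<dots> \<le> E * real ((n + 1) ^ card (UNIV::('e\<times>'e) set))"
    using sum_qprob_types[OF sub] unfolding E_def by (intro mult_left_mono) auto
  finally show ?thesis unfolding E_def B_def .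
qed

lemma Pbad_zero:
  fixes sig tau :: "'e::finite \<Rightarrow> 'v" and L :: "'e \<Rightarrow> 'l" and P :: "'e \<Rightarrow> real"
  assumes stat: "stationary_edge_pmf sig tau P"
    and k: "k > 0"
    and prim: "\<forall>u v. \<exists>p. is_path sig tau p \<and> length p = k \<and> sig (hd p) = u \<and> tau (last p) = v"
    and zeta: "\<zeta> > 0" and A: "A_set sig tau L P \<zeta> \<delta> = {}"
  shows "P_bad sig tau L P vroot \<zeta> \<delta> n = 0"
proof -
  have "BadS sig tau L P vroot \<zeta> \<delta> n = {}"
  proof (rule ccontr)
    assume "BadS sig tau L P vroot \<zeta> \<delta> n \<noteq> {}"
    then obtain w w' where w: "w \<in> typical_paths sig tau P vroot \<zeta> n" and w': "w' \<in> typical_paths sig tau P vroot \<zeta> n"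
      and ham: "real (hamming (map L w) (map L w')) / real n < \<delta>"
      unfolding BadS_def by auto
    show False using construct[OF stat k prim w w' ham zeta] A by blast
  qed
  then show ?thesis unfolding P_bad_alt by simp
qed



lemma Pbad_zero2:
  assumes "\<delta> \<le> 0"
  shows "P_bad sig tau L P vroot \<zeta> \<delta> n = 0"
proof -
  have "BadS sig tau L P vroot \<zeta> \<delta> n = {}"
  proof -
    have "\<not> (real (hamming (map L w) (map L w')) / real n < \<delta>)" for w w'
    proof -
      have "real (hamming (map L w) (map L w')) / real n \<ge> 0" by simp
      then show ?thesis using assms by linarith
    qed
    then show ?thesis unfolding BadS_def by blast
  qed
  then show ?thesis unfolding P_bad_alt by simp
qed

lemma path_prob_nonneg:
  fixes P :: "'e::finite \<Rightarrow> real"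
  assumes "\<And>e. P e > 0"
  shows "path_prob sig P w \<ge> 0"
proof -
  have "\<And>e. vmarg sig P e \<ge> 0" unfolding vmarg_def using assms by (simp add: sum_nonneg less_imp_le)
  then show ?thesis unfolding path_prob_def using assms
    by (intro prod_nonneg divide_nonneg_nonneg) (auto simp: less_imp_le)
qed

lemma rr_lim_gen:
  fixes m :: real assumes "m > 0"
  shows "(\<lambda>n::nat. (real n * m / (real n * m + real k)) * (real n / (real n + real k))) \<longlonglongrightarrow> 1"
  using assms by real_asymp

lemma log_lim_gen: "(\<lambda>n::nat. real M * log 2 (real n + 1) / real n) \<longlonglongrightarrow> 0"
  by real_asymp

lemma main_bound:
  fixes sig tau :: "'e::finite \<Rightarrow> 'v" and L :: "'e \<Rightarrow> 'l" and P :: "'e \<Rightarrow> real"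
  assumes stat: "stationary_edge_pmf sig tau P"
    and k: "k > 0"
    and prim: "\<forall>u v. \<exists>p. is_path sig tau p \<and> length p = k \<and> sig (hd p) = u \<and> tau (last p) = v"
    and zeta: "\<zeta> > 0"
  shows "limsup (\<lambda>n. log_rate (P_bad sig tau L P vroot \<zeta> \<delta> n) n)
           \<le> - (INF Q\<in>A_set sig tau L P \<zeta> \<delta>. ereal (2 * entropy_P sig P - entropy_Q sig Q))
             + ereal (2 * KP sig P * \<zeta>)"
proof (cases "A_set sig tau L P \<zeta> \<delta> = {} \<or> \<delta> \<le> 0")
  case True
  have "P_bad sig tau L P vroot \<zeta> \<delta> n = 0" for n
  proof (cases "A_set sig tau L P \<zeta> \<delta> = {}")
    case True
    then show ?thesis by (rule Pbad_zero[OF stat k prim zeta])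
  next
    case False
    then have "\<delta> \<le> 0" using \<open>A_set sig tau L P \<zeta> \<delta> = {} \<or> \<delta> \<le> 0\<close> by simp
    then show ?thesis by (rule Pbad_zero2)
  qed
  then have "(\<lambda>n. log_rate (P_bad sig tau L P vroot \<zeta> \<delta> n) n) = (\<lambda>n. -\<infinity>)"
    by (simp add: log_rate_def)
  then show ?thesis by (simp add: Limsup_const)
next
  case False
  then have Ane: "A_set sig tau L P \<zeta> \<delta> \<noteq> {}" and dpos: "\<delta> > 0" by auto
  define A where "A = A_set sig tau L P \<zeta> \<delta>"
  define H where "H = entropy_P sig P"
  define B where "B = real (card (UNIV::('e\<times>'e) set)) / ln 2"
  define M where "M = card (UNIV::('e\<times>'e) set)"
  define INFA where "INFA = (INF Q\<in>A. ereal (2 * H - entropy_Q sig Q))"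
  have HQB: "entropy_Q sig Q \<le> B" if "Q \<in> A" for Q
  proof -
    have "Q \<in> stationary_prod_measures sig tau" using that unfolding A_def A_set_def by blast
    then have "\<And>p. Q p \<ge> 0" "(\<Sum>p\<in>UNIV. Q p) = 1"
      unfolding stationary_prod_measures_def by blast+
    then show ?thesis unfolding B_def by (rule entropy_upper)
  qed
  have lo: "ereal (2 * H - B) \<le> INFA"
    unfolding INFA_def by (rule INF_greatest) (simp add: HQB)
  obtain Q0 where Q0: "Q0 \<in> A" using Ane unfolding A_def by auto
  have hi: "INFA \<le> ereal (2 * H - entropy_Q sig Q0)"
    unfolding INFA_def by (rule INF_lower[OF Q0])
  define I where "I = real_of_ereal INFA"
  have INFA_eq: "INFA = ereal I" unfolding I_def using lo hi by (cases INFA) auto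
  have Ib: "\<forall>Q\<in>A_set sig tau L P \<zeta> \<delta>. entropy_Q sig Q \<le> 2 * entropy_P sig P - I"
  proof
    fix Q assume "Q \<in> A_set sig tau L P \<zeta> \<delta>"
    then have "INFA \<le> ereal (2 * H - entropy_Q sig Q)" unfolding INFA_def A_def by (rule INF_lower)
    then show "entropy_Q sig Q \<le> 2 * entropy_P sig P - I" unfolding INFA_eq H_def by simp
  qed
  define g where "g = (\<lambda>n::nat. 2 * KP sig P * \<zeta> - I + (1 - rr n \<zeta> \<delta> k) * B + real M * log 2 (real n + 1) / real n)"
  have Ppos: "\<And>e. P e > 0" using stat unfolding stationary_edge_pmf_def by auto
  have ev: "log_rate (P_bad sig tau L P vroot \<zeta> \<delta> n) n \<le> ereal (g n)" if n: "n > 0" for n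
  proof (cases "P_bad sig tau L P vroot \<zeta> \<delta> n = 0")
    case True then show ?thesis by (simp add: log_rate_def)
  next
    case False
    define X where "X = real n * (2 * KP sig P * \<zeta> - I + (1 - rr n \<zeta> \<delta> k) * B)"
    have nn: "P_bad sig tau L P vroot \<zeta> \<delta> n \<ge> 0"
      unfolding P_bad_alt using path_prob_nonneg[where P=P, OF Ppos] by (intro sum_nonneg) (auto intro!: mult_nonneg_nonneg)
    then have pos: "P_bad sig tau L P vroot \<zeta> \<delta> n > 0" using False by simp
    have bd: "P_bad sig tau L P vroot \<zeta> \<delta> n \<le> 2 powr X * (real n + 1) ^ M"
      using Pbad_bound[OF stat k prim zeta n Ib] unfolding X_def B_def M_def by (simp add: add.commute)
    have "log 2 (P_bad sig tau L P vroot \<zeta> \<delta> n) \<le> log 2 (2 powr X * (real n + 1) ^ M)"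
      using pos bd by (subst log_le_cancel_iff) auto
    also have "\<dots> = X + real M * log 2 (real n + 1)"
      by (simp add: log_mult log_nat_power)
    finally have "log 2 (P_bad sig tau L P vroot \<zeta> \<delta> n) / real n \<le> (X + real M * log 2 (real n + 1)) / real n"
      using n by (simp add: divide_right_mono)
    also have "\<dots> = g n" unfolding X_def g_def using n by (simp add: add_divide_distrib)
    finally show ?thesis using False by (simp add: log_rate_def)
  qed
  have m: "min \<zeta> \<delta> > 0" using zeta dpos by simp
  have rr_lim: "(\<lambda>n. rr n \<zeta> \<delta> k) \<longlonglongrightarrow> 1"
    unfolding rr_def by (rule rr_lim_gen[OF m])
  have log_lim: "(\<lambda>n::nat. real M * log 2 (real n + 1) / real n) \<longlonglongrightarrow> 0"
    by (rule log_lim_gen)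
  have "g \<longlonglongrightarrow> 2 * KP sig P * \<zeta> - I + (1 - 1) * B + 0"
    unfolding g_def by (intro tendsto_intros rr_lim log_lim)
  then have glim: "(\<lambda>n. ereal (g n)) \<longlonglongrightarrow> ereal (2 * KP sig P * \<zeta> - I)"
    by (simp add: tendsto_ereal)
  have "limsup (\<lambda>n. log_rate (P_bad sig tau L P vroot \<zeta> \<delta> n) n) \<le> limsup (\<lambda>n. ereal (g n))"
  proof (rule Limsup_mono)
    show "\<forall>\<^sub>F n in sequentially. log_rate (P_bad sig tau L P vroot \<zeta> \<delta> n) n \<le> ereal (g n)"
      unfolding eventually_sequentially by (rule exI[of _ 1]) (simp add: ev)
  qed
  also have "\<dots> = ereal (2 * KP sig P * \<zeta> - I)"
    by (rule lim_imp_Limsup[OF trivial_limit_sequentially glim])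
  also have "\<dots> = - INFA + ereal (2 * KP sig P * \<zeta>)" unfolding INFA_eq by simp
  finally show ?thesis unfolding INFA_def A_def H_def .
qed


theorem lemma3:
  fixes sig tau :: "'e::finite \<Rightarrow> 'v::finite" and L :: "'e \<Rightarrow> 'l::finite"
    and P :: "'e \<Rightarrow> real" and vroot :: 'v
  assumes "deterministic sig L" and "lossless sig tau L" and "primitive sig tau"
    and "stationary_edge_pmf sig tau P"
  shows "\<exists>C::real. \<forall>\<alpha> \<zeta> \<epsilon>::real.
     0 < \<alpha> \<and> \<alpha> < 1 \<and> 0 < \<zeta> \<and> \<zeta> < (1 - \<alpha>) / \<alpha> * Pmin P \<and> 0 < \<epsilon> \<longrightarrow>
     (let S = (\<Sum>a\<in>UNIV. (\<Sum>e\<in>{e. L e = a}. P e)\<^sup>2);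
          \<delta> = 1 - S - \<epsilon>
      in limsup (\<lambda>n. log_rate (P_bad sig tau L P vroot \<zeta> \<delta> n) n)
           \<le> - (INF Q\<in>A_set sig tau L P \<zeta> \<delta>. ereal (2 * entropy_P sig P - entropy_Q sig Q))
             + ereal (C * \<zeta>))"
proof -
  obtain k where k: "k > 0"
    and prim: "\<forall>u v. \<exists>p. is_path sig tau p \<and> length p = k \<and> sig (hd p) = u \<and> tau (last p) = v"
    using assms(3) unfolding primitive_def by blast
  show ?thesis
  proof (intro exI[of _ "2 * KP sig P"] allI impI)
    fix \<alpha> \<zeta> \<epsilon> :: real
    assume h: "0 < \<alpha> \<and> \<alpha> < 1 \<and> 0 < \<zeta> \<and> \<zeta> < (1 - \<alpha>) / \<alpha> * Pmin P \<and> 0 < \<epsilon>"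
    then have z: "\<zeta> > 0" by simp
    show "let S = (\<Sum>a\<in>UNIV. (\<Sum>e\<in>{e. L e = a}. P e)\<^sup>2);
          \<delta> = 1 - S - \<epsilon>
      in limsup (\<lambda>n. log_rate (P_bad sig tau L P vroot \<zeta> \<delta> n) n)
           \<le> - (INF Q\<in>A_set sig tau L P \<zeta> \<delta>. ereal (2 * entropy_P sig P - entropy_Q sig Q))
             + ereal (2 * KP sig P * \<zeta>)"
      unfolding Let_def by (rule main_bound[OF assms(4) k prim z])
  qed
qed

end
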